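(* Let $n\geq 5$ and $1\leq i\leq\lfloor n/2\rfloor$. Let $G_i$ be the graph obtained from the complete graph $K_n$ by deleting $i$ edges, each of which joins two saturated vertices (equivalently, deleting the edges of a matching of size $i$). If $g:V((G_i)_1)\to V((G_i)_2)$ is a constant function, then $$Dist(F_{G_i})=\max\{n-2i,\ \phi(i)\}.$$
   Context: A vertex of a graph is saturated if it is adjacent to all other vertices. $Dist(H)$ is the least $t$ such that $H$ has a labeling $V(H)\to\{1,\dots,t\}$ preserved by no non-identity automorphism of $H$. Functigraph: for disjoint copies $H_1,H_2$ of a graph $H$ and a function $g:V(H_1)\to V(H_2)$, $F_H$ has vertex set $V(H_1)\cup V(H_2)$ and edge set $E(H_1)\cup E(H_2)\cup\{uv: u\in V(H_1),\ g(u)=v\}$. The function $\phi:\mathbb{N}\to\mathbb{N}\setminus\{1\}$ is defined by $\phi(i)=k$, where $k$ is the least number (with $k\ge 2$) such that $i\leq\binom{k}{2}$; e.g. $\phi(32)=9$. *)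

theory Defs
  imports Main
begin

definition complete_edges :: "'a set \<Rightarrow> 'a set set" where
  "complete_edges V = {{u, v} | u v. u \<in> V \<and> v \<in> V \<and> u \<noteq> v}"

definition saturated :: "'a set \<Rightarrow> 'a set set \<Rightarrow> 'a \<Rightarrow> bool" where
  "saturated V E v \<longleftrightarrow> v \<in> V \<and> (\<forall>u\<in>V. u \<noteq> v \<longrightarrow> {u, v} \<in> E)"

definition is_matching :: "'a set set \<Rightarrow> bool" where
  "is_matching M \<longleftrightarrow> (\<forall>e\<in>M. \<forall>f\<in>M. e \<noteq> f \<longrightarrow> e \<inter> f = {})"

definition graph_aut :: "'a set \<Rightarrow> 'a set set \<Rightarrow> ('a \<Rightarrow> 'a) \<Rightarrow> bool" where
  "graph_aut V E \<sigma> \<longleftrightarrow> bij_betw \<sigma> V V \<and>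
     (\<forall>u\<in>V. \<forall>v\<in>V. {u, v} \<in> E \<longleftrightarrow> {\<sigma> u, \<sigma> v} \<in> E)"

definition distinguishing_labeling :: "'a set \<Rightarrow> 'a set set \<Rightarrow> nat \<Rightarrow> ('a \<Rightarrow> nat) \<Rightarrow> bool" where
  "distinguishing_labeling V E t l \<longleftrightarrow> l ` V \<subseteq> {1..t} \<and>
     (\<forall>\<sigma>. graph_aut V E \<sigma> \<and> (\<forall>v\<in>V. l (\<sigma> v) = l v) \<longrightarrow> (\<forall>v\<in>V. \<sigma> v = v))"

definition Dist :: "'a set \<Rightarrow> 'a set set \<Rightarrow> nat" where
  "Dist V E = (LEAST t. \<exists>l. distinguishing_labeling V E t l)"

text \<open>Functigraph: two disjoint copies (Inl / Inr) of H with edges u -- g(u).\<close>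

definition functigraph_V :: "'a set \<Rightarrow> ('a + 'a) set" where
  "functigraph_V V = Inl ` V \<union> Inr ` V"

definition functigraph_E :: "'a set \<Rightarrow> 'a set set \<Rightarrow> ('a \<Rightarrow> 'a) \<Rightarrow> ('a + 'a) set set" where
  "functigraph_E V E g = (image Inl) ` E \<union> (image Inr) ` E \<union> {{Inl u, Inr (g u)} | u. u \<in> V}"

definition phi :: "nat \<Rightarrow> nat" where
  "phi i = (LEAST k. 2 \<le> k \<and> i \<le> k choose 2)"

end

theory Submission imports Defs begin

lemma imgL: "(Inl ` S :: ('a + 'b) set) = {Inl a, Inl b} \<longleftrightarrow> S = {a,b}"
proof
  assume h: "(Inl ` S :: ('a + 'b) set) = {Inl a, Inl b}"
  have "vimage Inl (Inl ` S :: ('a + 'b) set) = S" by (rule inj_vimage_image_eq[OF inj_Inl])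
  then show "S = {a,b}" unfolding h by auto
qed simp
lemma imgR: "(Inr ` S :: ('b + 'a) set) = {Inr a, Inr b} \<longleftrightarrow> S = {a,b}"
proof
  assume h: "(Inr ` S :: ('b + 'a) set) = {Inr a, Inr b}"
  have "vimage Inr (Inr ` S :: ('b + 'a) set) = S" by (rule inj_vimage_image_eq[OF inj_Inr])
  then show "S = {a,b}" unfolding h by auto
qed simp

lemma memL: "({Inl a, Inl b} ) \<in> (image Inl) ` X \<longleftrightarrow> {a,b} \<in> X" for X
proof
  assume "{Inl a, Inl b} \<in> (image Inl) ` X"
  then obtain S where S: "S \<in> X" "{Inl a, Inl b} = Inl ` S" by blast
  from S(2)[symmetric] have "S = {a,b}" by (rule imgL[THEN iffD1])
  then show "{a,b} \<in> X" using S(1) by simp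
next
  assume "{a,b} \<in> X"
  then have "Inl ` {a,b} \<in> (image Inl) ` X" by (rule imageI)
  then show "{Inl a, Inl b} \<in> (image Inl) ` X" by simp
qed

lemma memR: "({Inr a, Inr b} ) \<in> (image Inr) ` X \<longleftrightarrow> {a,b} \<in> X" for X
proof
  assume "{Inr a, Inr b} \<in> (image Inr) ` X"
  then obtain S where S: "S \<in> X" "{Inr a, Inr b} = Inr ` S" by blast
  from S(2)[symmetric] have "S = {a,b}" by (rule imgR[THEN iffD1])
  then show "{a,b} \<in> X" using S(1) by simp
next
  assume "{a,b} \<in> X"
  then have "Inr ` {a,b} \<in> (image Inr) ` X" by (rule imageI)
  then show "{Inr a, Inr b} \<in> (image Inr) ` X" by simp
qed

lemma nmem1: "{x, Inl b} \<notin> (image Inr) ` X" for X :: "'a set set"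
proof
  assume "{x, Inl b} \<in> (image Inr) ` X"
  then obtain S where eq: "{x, Inl b} = Inr ` S" by blast
  have "Inl b \<in> {x, Inl b}" by simp
  then have "Inl b \<in> Inr ` S" unfolding eq .
  then show False by blast
qed

lemma nmem2: "{x, Inr b} \<notin> (image Inl) ` X" for X :: "'a set set"
proof
  assume "{x, Inr b} \<in> (image Inl) ` X"
  then obtain S where eq: "{x, Inr b} = Inl ` S" by blast
  have "Inr b \<in> {x, Inr b}" by simp
  then have "Inr b \<in> Inl ` S" unfolding eq .
  then show False by blast
qed

lemma nmem1': "{Inl b, x} \<notin> (image Inr) ` X" for X :: "'a set set"
  using nmem1[of x b X] by (simp add: insert_commute)


locale FG =
  fixes V :: "'a set" and M :: "'a set set" and n i :: nat and g :: "'a \<Rightarrow> 'a" and c :: 'a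
  assumes finV: "finite V" and cardV: "card V = n" and n5: "n \<ge> 5"
    and i1: "1 \<le> i" and i2: "i \<le> n div 2"
    and Msub: "M \<subseteq> complete_edges V" and cardM: "card M = i" and match: "is_matching M"
    and cV: "c \<in> V" and gc: "\<forall>u\<in>V. g u = c"
begin

definition "FV = functigraph_V V"
definition "FE = functigraph_E V (complete_edges V - M) g"
definition "W = \<Union>M"
definition "U = V - W"
definition "adjG a b \<longleftrightarrow> a \<in> V \<and> b \<in> V \<and> a \<noteq> b \<and> {a,b} \<notin> M"

lemma edgeM: "e \<in> M \<Longrightarrow> \<exists>a b. a \<in> V \<and> b \<in> V \<and> a \<noteq> b \<and> e = {a,b}"
  using Msub unfolding complete_edges_def by blast

lemma match_eq: "e \<in> M \<Longrightarrow> f \<in> M \<Longrightarrow> x \<in> e \<Longrightarrow> x \<in> f \<Longrightarrow> e = f"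
  using match unfolding is_matching_def by blast

lemma pairM: "{a,b} \<in> M \<Longrightarrow> a \<noteq> b \<and> a \<in> V \<and> b \<in> V"
proof -
  assume "{a,b} \<in> M"
  then obtain x y where xy: "x \<in> V" "y \<in> V" "x \<noteq> y" "{a,b} = {x,y}" using edgeM by blast
  then have "a = x \<and> b = y \<or> a = y \<and> b = x" by (simp add: doubleton_eq_iff)
  then show ?thesis using xy by blast
qed

lemma finM: "finite M"
proof (rule ccontr)
  assume "infinite M" then have "card M = 0" by simp
  then show False using cardM i1 by simp
qed

lemma WV: "W \<subseteq> V"
proof
  fix x assume "x \<in> W"
  then obtain e where e: "e \<in> M" "x \<in> e" unfolding W_def by blast
  obtain a b where "a \<in> V" "b \<in> V" "e = {a,b}" using edgeM[OF e(1)] by blast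
  then show "x \<in> V" using e(2) by blast
qed

lemma cardW: "card W = 2*i"
proof -
  have "card W = sum card M" unfolding W_def
    by (rule card_Union_disjoint) (use match edgeM in \<open>auto simp: pairwise_def disjnt_def is_matching_def\<close>)
  also have "\<dots> = sum (\<lambda>_. 2) M" by (rule sum.cong) (auto dest!: edgeM)
  finally show ?thesis using cardM by simp
qed

lemma cardU: "card U = n - 2*i"
  unfolding U_def using card_Diff_subset[OF finite_subset[OF WV finV] WV] cardW cardV by simp

lemma ce: "{a,b} \<in> complete_edges V \<longleftrightarrow> a \<in> V \<and> b \<in> V \<and> a \<noteq> b"
  unfolding complete_edges_def by (auto simp: doubleton_eq_iff)

lemma FE_eq: "FE = (image Inl) ` (complete_edges V - M) \<union> (image Inr) ` (complete_edges V - M) \<union> {{Inl u, Inr (g u)} | u. u \<in> V}"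
  unfolding FE_def functigraph_E_def by (rule refl)

lemma E'_iff: "{a,b} \<in> complete_edges V - M \<longleftrightarrow> adjG a b"
  unfolding adjG_def using ce by blast

lemma nmem3: "{Inl a, Inl b} \<notin> {{Inl u, Inr (g u)} | u. u \<in> V}"
proof
  assume "{Inl a, Inl b} \<in> {{Inl u, Inr (g u)} | u. u \<in> V}"
  then obtain u where "{Inl a, Inl b} = {Inl u, Inr (g u)}" by blast
  then have "Inr (g u) \<in> {Inl a, Inl b}" by simp
  then show False by blast
qed

lemma nmem4: "{Inr a, Inr b} \<notin> {{Inl u, Inr (g u)} | u. u \<in> V}"
proof
  assume "{Inr a, Inr b} \<in> {{Inl u, Inr (g u)} | u. u \<in> V}"
  then obtain u where "{Inr a, Inr b} = {Inl u, Inr (g u)}" by blast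
  then have "Inl u \<in> {Inr a, Inr b}" by simp
  then show False by blast
qed

lemma mem5: "{Inl a, Inr b} \<in> {{Inl u, Inr (g u)} | u. u \<in> V} \<longleftrightarrow> a \<in> V \<and> b = c"
proof
  assume "{Inl a, Inr b} \<in> {{Inl u, Inr (g u)} | u. u \<in> V}"
  then obtain u where u: "u \<in> V" "{Inl a, Inr b} = {Inl u, Inr (g u)}" by blast
  then have "a = u" "b = g u" by (auto simp: doubleton_eq_iff)
  then show "a \<in> V \<and> b = c" using u gc by simp
next
  assume "a \<in> V \<and> b = c"
  then show "{Inl a, Inr b} \<in> {{Inl u, Inr (g u)} | u. u \<in> V}" using gc by auto
qed

lemma FE_ll: "{Inl a, Inl b} \<in> FE \<longleftrightarrow> adjG a b"
  unfolding FE_eq Un_iff by (simp only: memL nmem1 nmem3 E'_iff simp_thms)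

lemma FE_rr: "{Inr a, Inr b} \<in> FE \<longleftrightarrow> adjG a b"
  unfolding FE_eq Un_iff by (simp only: memR nmem2 nmem4 E'_iff simp_thms)

lemma FE_lr: "{Inl a, Inr b} \<in> FE \<longleftrightarrow> a \<in> V \<and> b = c"
  unfolding FE_eq Un_iff by (simp only: nmem2 nmem1' mem5 simp_thms)

lemma FE_rl: "{Inr b, Inl a} \<in> FE \<longleftrightarrow> a \<in> V \<and> b = c"
  using FE_lr by (simp add: insert_commute)

lemmas FE_simps = FE_ll FE_rr FE_lr FE_rl

lemma FV_iff: "Inl a \<in> FV \<longleftrightarrow> a \<in> V" "Inr a \<in> FV \<longleftrightarrow> a \<in> V"
  unfolding FV_def functigraph_V_def by auto


lemma FV_cases: "x \<in> FV \<Longrightarrow> (\<And>a. a \<in> V \<Longrightarrow> x = Inl a \<Longrightarrow> P) \<Longrightarrow> (\<And>a. a \<in> V \<Longrightarrow> x = Inr a \<Longrightarrow> P) \<Longrightarrow> P"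
  unfolding FV_def functigraph_V_def by auto

lemma aut_lift:
  assumes inv: "\<And>x. \<pi> (\<pi> x) = x" and PV: "\<And>x. x \<in> V \<Longrightarrow> \<pi> x \<in> V"
    and PM: "\<And>e. e \<in> M \<Longrightarrow> \<pi> ` e \<in> M"
  shows "graph_aut FV FE (map_sum \<pi> id)"
proof -
  have Mi: "{\<pi> x, \<pi> y} \<in> M \<longleftrightarrow> {x,y} \<in> M" for x y
    using PM[of "{x,y}"] PM[of "{\<pi> x, \<pi> y}"] inv by auto
  have Vi: "\<pi> x \<in> V \<longleftrightarrow> x \<in> V" for x using PV[of x] PV[of "\<pi> x"] inv by auto
  have Ni: "\<pi> x = \<pi> y \<longleftrightarrow> x = y" for x y using inv by metis
  have adj: "adjG (\<pi> a) (\<pi> b) \<longleftrightarrow> adjG a b" for a b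
    unfolding adjG_def using Mi Vi Ni by blast
  have inv2: "map_sum \<pi> id (map_sum \<pi> id x) = x" for x
    by (cases x) (simp_all add: inv)
  have img: "map_sum \<pi> id ` FV \<subseteq> FV"
    using PV unfolding FV_def functigraph_V_def by auto
  have "bij_betw (map_sum \<pi> id) FV FV"
    by (rule bij_betw_byWitness[where f'="map_sum \<pi> id"]) (use inv2 img in auto)
  moreover have "{u, v} \<in> FE \<longleftrightarrow> {map_sum \<pi> id u, map_sum \<pi> id v} \<in> FE"
    if "u \<in> FV" "v \<in> FV" for u v
    using that by (elim FV_cases) (auto simp: FE_simps adj Vi)
  ultimately show ?thesis unfolding graph_aut_def by blast
qed

definition sw :: "'a \<Rightarrow> 'a \<Rightarrow> 'a \<Rightarrow> 'a" where
  "sw a b x = (if x = a then b else if x = b then a else x)"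

lemma lower:
  assumes dl: "distinguishing_labeling FV FE t l"
  shows "max (n - 2*i) (phi i) \<le> t"
proof -
  define l1 where "l1 u = l (Inl u)" for u
  have lV: "l1 ` V \<subseteq> {1..t}" using dl unfolding distinguishing_labeling_def l1_def
    by (auto simp: FV_iff)
  have key: "\<pi> x = x"
    if xV: "x \<in> V" and inv: "\<And>x. \<pi> (\<pi> x) = x" and PV: "\<And>x. x \<in> V \<Longrightarrow> \<pi> x \<in> V"
    and PM: "\<And>e. e \<in> M \<Longrightarrow> \<pi> ` e \<in> M" and PL: "\<And>x. x \<in> V \<Longrightarrow> l1 (\<pi> x) = l1 x" for \<pi> x
  proof -
    have A: "graph_aut FV FE (map_sum \<pi> id)" by (rule aut_lift[OF inv PV PM])
    have "\<forall>v\<in>FV. l (map_sum \<pi> id v) = l v"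
      using PL by (auto elim!: FV_cases simp: l1_def)
    with A dl have "\<forall>v\<in>FV. map_sum \<pi> id v = v" unfolding distinguishing_labeling_def by blast
    moreover have "Inl x \<in> FV" using xV by (simp add: FV_iff)
    ultimately have "map_sum \<pi> id (Inl x :: 'a + 'a) = Inl x" by blast
    then show ?thesis by simp
  qed
  have injU: "inj_on l1 U"
  proof (rule inj_onI, rule ccontr)
    fix a b assume a: "a \<in> U" and b: "b \<in> U" and lab: "l1 a = l1 b" and ne: "a \<noteq> b"
    have aW: "a \<notin> e" "b \<notin> e" if "e \<in> M" for e using a b that unfolding U_def W_def by auto
    have "sw a b a = a"
    proof (rule key[of a "sw a b"])
      show "sw a b (sw a b x) = x" for x by (simp add: sw_def)
      show "sw a b x \<in> V" if "x \<in> V" for x using that a b unfolding U_def sw_def by auto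
      show "sw a b ` e \<in> M" if "e \<in> M" for e
      proof -
        have "sw a b ` e = e" using aW[OF that] by (auto simp: sw_def)
        then show ?thesis using that by simp
      qed
      show "l1 (sw a b x) = l1 x" for x using lab by (simp add: sw_def)
      show "a \<in> V" using a unfolding U_def by auto
    qed
    then show False using ne by (simp add: sw_def)
  qed
  have inje: "l1 a \<noteq> l1 b" if ab: "{a,b} \<in> M" for a b
  proof
    assume lab: "l1 a = l1 b"
    have ne: "a \<noteq> b" "a \<in> V" "b \<in> V" using pairM[OF ab] by auto
    have "sw a b a = a"
    proof (rule key[of a "sw a b"])
      show "sw a b (sw a b x) = x" for x by (simp add: sw_def)
      show "sw a b x \<in> V" if "x \<in> V" for x using that ne unfolding sw_def by auto
      show "sw a b ` e \<in> M" if e: "e \<in> M" for e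
      proof (cases "e = {a,b}")
        case True
        then have "sw a b ` e = {b,a}" by (auto simp: sw_def)
        then show ?thesis using ab by (simp add: insert_commute)
      next
        case False
        then have "a \<notin> e" "b \<notin> e" using match_eq[OF e ab] by auto
        then have "sw a b ` e = e" by (auto simp: sw_def)
        then show ?thesis using e by simp
      qed
      show "l1 (sw a b x) = l1 x" for x using lab by (simp add: sw_def)
    qed (use ne in auto)
    then show False using ne by (simp add: sw_def)
  qed
  have injM: "inj_on (\<lambda>e. l1 ` e) M"
  proof (rule inj_onI, rule ccontr)
    fix e e' assume e: "e \<in> M" and e': "e' \<in> M" and lab: "l1 ` e = l1 ` e'" and ne: "e \<noteq> e'"
    obtain a b where ab: "e = {a,b}" "a \<noteq> b" using edgeM[OF e] by blast
    obtain a0 b0 where ab0: "e' = {a0,b0}" using edgeM[OF e'] by blast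
    have dis: "e \<inter> e' = {}" using match e e' ne unfolding is_matching_def by blast
    have "{l1 a, l1 b} = {l1 a0, l1 b0}" using lab ab ab0 by simp
    then have "l1 a = l1 a0 \<and> l1 b = l1 b0 \<or> l1 a = l1 b0 \<and> l1 b = l1 a0"
      by (simp add: doubleton_eq_iff)
    then obtain a' b' where ab': "e' = {a',b'}" "l1 a' = l1 a" "l1 b' = l1 b"
    proof (elim disjE conjE)
      assume "l1 a = l1 a0" "l1 b = l1 b0"
      then show thesis using that[of a0 b0] ab0 by simp
    next
      assume "l1 a = l1 b0" "l1 b = l1 a0"
      then show thesis using that[of b0 a0] ab0 by (simp add: insert_commute)
    qed
    have abM: "{a,b} \<in> M" "{a',b'} \<in> M" using e e' ab ab' by auto
    have ne': "a' \<noteq> b'" using pairM[OF abM(2)] by auto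
    have d: "a \<noteq> a'" "a \<noteq> b'" "b \<noteq> a'" "b \<noteq> b'" using dis ab ab' by auto
    have V4: "a \<in> V" "b \<in> V" "a' \<in> V" "b' \<in> V" using pairM[OF abM(1)] pairM[OF abM(2)] by auto
    define \<pi> where "\<pi> = sw a a' \<circ> sw b b'"
    have "\<pi> a = a"
    proof (rule key[of a \<pi>])
      show "\<pi> (\<pi> x) = x" for x using d ab(2) ne' by (auto simp: \<pi>_def sw_def)
      show "\<pi> x \<in> V" if "x \<in> V" for x using that V4 unfolding \<pi>_def sw_def by auto
      show "\<pi> ` f \<in> M" if f: "f \<in> M" for f
      proof (cases "f = e \<or> f = e'")
        case True
        moreover have "\<pi> ` e = e'" "\<pi> ` e' = e" using ab ab' d ab(2) ne'
          by (auto simp: \<pi>_def sw_def)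
        ultimately show ?thesis using e e' by auto
      next
        case False
        then have "a \<notin> f" "b \<notin> f" "a' \<notin> f" "b' \<notin> f"
          using match_eq[OF f e] match_eq[OF f e'] ab ab' by auto
        then have "\<pi> ` f = f" by (auto simp: \<pi>_def sw_def)
        then show ?thesis using f by simp
      qed
      show "l1 (\<pi> x) = l1 x" for x using ab' d ne' ab(2) by (simp add: \<pi>_def sw_def)
    qed (use V4 in auto)
    then show False using d ab(2) by (simp add: \<pi>_def sw_def)
  qed
  have UV: "U \<subseteq> V" unfolding U_def by auto
  have c1: "card U \<le> t"
    using card_inj_on_le[OF injU _ finite_atLeastAtMost[of 1 t]] lV UV by fastforce
  have c2: "i \<le> t choose 2"
  proof -
    have "(\<lambda>e. l1 ` e) ` M \<subseteq> {S. S \<subseteq> {1..t} \<and> card S = 2}"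
    proof
      fix S assume "S \<in> (\<lambda>e. l1 ` e) ` M"
      then obtain e where e: "e \<in> M" "S = l1 ` e" by blast
      obtain a b where ab: "e = {a,b}" using edgeM[OF e(1)] by blast
      have "l1 a \<noteq> l1 b" using inje e ab by auto
      moreover have "e \<subseteq> V" using edgeM[OF e(1)] by auto
      ultimately show "S \<in> {S. S \<subseteq> {1..t} \<and> card S = 2}" using e ab lV by auto
    qed
    from card_inj_on_le[OF injM this] have "card M \<le> card {S. S \<subseteq> {1..t} \<and> card S = 2}" by simp
    also have "\<dots> = t choose 2" using n_subsets[of "{1..t}" 2] by simp
    finally show ?thesis using cardM by simp
  qed
  have t2: "2 \<le> t"
  proof (rule ccontr)
    assume h: "\<not> 2 \<le> t"
    then have "t < 2" by simp
    then have "t choose 2 = 0" by (rule binomial_eq_0)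
    then show False using c2 i1 by linarith
  qed
  have "phi i \<le> t" unfolding phi_def by (rule Least_le) (use t2 c2 in auto)
  then show ?thesis using c1 cardU by simp
qed

abbreviation inL :: "'a \<Rightarrow> 'a + 'a" where "inL \<equiv> Inl"
abbreviation inR :: "'a \<Rightarrow> 'a + 'a" where "inR \<equiv> Inr"

lemma phiP: "2 \<le> phi i \<and> i \<le> phi i choose 2"
proof -
  have h1: "i * 1 \<le> i * i" using i1 by (rule mult_le_mono2)
  have "(2*i) div 2 \<le> (i + i*i) div 2" using h1 by (intro div_le_mono) simp
  then have "i \<le> (i + 1) choose 2" by (simp add: choose_two algebra_simps)
  then have ex: "2 \<le> i + 1 \<and> i \<le> (i + 1) choose 2" using i1 by simp
  show ?thesis unfolding phi_def by (rule LeastI[of "\<lambda>k. 2 \<le> k \<and> i \<le> k choose 2", OF ex])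
qed

lemma finFV: "finite FV" using finV unfolding FV_def functigraph_V_def by auto

lemma fixl:
  assumes injU: "inj_on l1 U" and inje: "\<And>e. e \<in> M \<Longrightarrow> inj_on l1 e"
    and injM: "inj_on (\<lambda>e. l1 ` e) M"
    and PV: "\<forall>x\<in>V. \<pi> x \<in> V" and PI: "inj_on \<pi> V"
    and PA: "\<forall>x\<in>V. \<forall>y\<in>V. x \<noteq> y \<longrightarrow> (adjG x y \<longleftrightarrow> adjG (\<pi> x) (\<pi> y))"
    and PL: "\<forall>x\<in>V. l1 (\<pi> x) = l1 x" and u: "u \<in> V"
  shows "\<pi> u = u"
proof -
  have surj: "\<pi> ` V = V"
    by (rule card_subset_eq[OF finV]) (use PV card_image[OF PI] in auto)
  have Mi: "{x,y} \<in> M \<longleftrightarrow> {\<pi> x, \<pi> y} \<in> M" if "x \<in> V" "y \<in> V" "x \<noteq> y" for x y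
  proof -
    have "\<pi> x \<noteq> \<pi> y" using PI that by (meson inj_onD)
    then show ?thesis using PA that PV unfolding adjG_def by auto
  qed
  show ?thesis
  proof (cases "u \<in> U")
    case True
    have "\<pi> u \<in> U"
    proof (rule ccontr)
      assume "\<pi> u \<notin> U"
      then have "\<pi> u \<in> W" using PV u unfolding U_def by auto
      then obtain e where e: "e \<in> M" "\<pi> u \<in> e" unfolding W_def by auto
      obtain a b where ab: "a \<in> V" "b \<in> V" "a \<noteq> b" "e = {a,b}" using edgeM[OF e(1)] by blast
      then have "\<exists>w. e = {\<pi> u, w} \<and> w \<in> V \<and> w \<noteq> \<pi> u" using e(2) by (auto simp: insert_commute)
      then obtain w where w: "e = {\<pi> u, w}" "w \<in> V" "w \<noteq> \<pi> u" by blast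
      then obtain y where y: "y \<in> V" "w = \<pi> y" using surj by blast
      have "y \<noteq> u" using w y by auto
      have "{u,y} \<in> M" using Mi[OF u y(1) \<open>y \<noteq> u\<close>[symmetric]] e w y by simp
      then have "u \<in> W" unfolding W_def by blast
      then show False using True unfolding U_def by auto
    qed
    then show ?thesis using injU True PL u by (meson inj_onD)
  next
    case False
    then have "u \<in> W" using u unfolding U_def by auto
    then obtain e where e: "e \<in> M" "u \<in> e" unfolding W_def by auto
    obtain a b where ab: "a \<in> V" "b \<in> V" "a \<noteq> b" "e = {a,b}" using edgeM[OF e(1)] by blast
    then have "\<exists>p. e = {u, p} \<and> p \<in> V \<and> p \<noteq> u" using e(2) by (auto simp: insert_commute)
    then obtain p where p: "e = {u,p}" "p \<in> V" "p \<noteq> u" by blast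
    have upM: "{u,p} \<in> M" using e p by simp
    have pM: "{\<pi> u, \<pi> p} \<in> M" using Mi[OF u p(2) p(3)[symmetric]] upM by simp
    have "(\<lambda>e. l1 ` e) {\<pi> u, \<pi> p} = (\<lambda>e. l1 ` e) {u,p}" using PL u p(2) by simp
    then have "{\<pi> u, \<pi> p} = {u,p}" by (rule inj_onD[OF injM _ pM upM])
    then have "\<pi> u = u \<and> \<pi> p = p \<or> \<pi> u = p \<and> \<pi> p = u" by (simp add: doubleton_eq_iff)
    then have "\<pi> u = u \<or> \<pi> u = p" by blast
    moreover have "\<pi> u \<noteq> p"
    proof
      assume "\<pi> u = p"
      then have "l1 p = l1 u" using PL u by auto
      have "p \<in> e" "u \<in> e" using p(1) by simp_all
      then have "p = u" using inj_onD[OF inje[OF e(1)] \<open>l1 p = l1 u\<close>] by simp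
      then show False using p(3) by simp
    qed
    ultimately show ?thesis by blast
  qed
qed

definition "nb x = {y \<in> FV. {x,y} \<in> FE}"

lemma aut_adj: "graph_aut FV FE \<sigma> \<Longrightarrow> x \<in> FV \<Longrightarrow> y \<in> FV \<Longrightarrow> {\<sigma> x, \<sigma> y} \<in> FE \<longleftrightarrow> {x,y} \<in> FE"
  unfolding graph_aut_def by blast

lemma nb_card:
  assumes A: "graph_aut FV FE \<sigma>" and x: "x \<in> FV"
  shows "card (nb (\<sigma> x)) = card (nb x)"
proof -
  have bij: "bij_betw \<sigma> FV FV" using A unfolding graph_aut_def by blast
  have inj: "inj_on \<sigma> FV" and img: "\<sigma> ` FV = FV"
    using bij bij_betw_imp_inj_on bij_betw_imp_surj_on by blast+
  have "\<sigma> ` nb x = nb (\<sigma> x)"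
  proof
    show "\<sigma> ` nb x \<subseteq> nb (\<sigma> x)" using aut_adj[OF A x] img unfolding nb_def by auto
    show "nb (\<sigma> x) \<subseteq> \<sigma> ` nb x"
    proof
      fix z assume "z \<in> nb (\<sigma> x)"
      then have z: "z \<in> FV" "{\<sigma> x, z} \<in> FE" unfolding nb_def by auto
      then obtain y where y: "y \<in> FV" "z = \<sigma> y" using img by blast
      then have "{x,y} \<in> FE" using aut_adj[OF A x y(1)] z by simp
      then show "z \<in> \<sigma> ` nb x" using y unfolding nb_def by auto
    qed
  qed
  moreover have "inj_on \<sigma> (nb x)" using inj unfolding nb_def by (rule inj_on_subset) auto
  ultimately show ?thesis using card_image by fastforce
qed

lemma cardVc: "x \<in> V \<Longrightarrow> card (V - {x}) = n - 1" using finV cardV by simp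

lemma nbL: "u \<in> V \<Longrightarrow> card (nb (Inl u)) \<le> n"
proof -
  assume u: "u \<in> V"
  have "nb (Inl u) \<subseteq> insert (Inr c) (inL ` (V - {u}))"
    unfolding nb_def by (auto elim!: FV_cases simp: FE_simps adjG_def)
  then have "card (nb (Inl u)) \<le> card (insert (Inr c) (inL ` (V - {u})))"
    by (rule card_mono[rotated]) (use finV in auto)
  also have "\<dots> \<le> Suc (card (inL ` (V - {u})))"
  proof -
    have "finite (inL ` (V - {u}))" using finV by simp
    then show ?thesis by (simp add: card_insert_if)
  qed
  also have "\<dots> \<le> Suc (n - 1)" using card_image_le[of "V - {u}" Inl] finV cardVc[OF u] by simp
  finally show ?thesis using n5 by simp
qed

lemma nbR: "v \<in> V \<Longrightarrow> v \<noteq> c \<Longrightarrow> card (nb (Inr v)) \<le> n"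
proof -
  assume v: "v \<in> V" "v \<noteq> c"
  have sub: "nb (Inr v) \<subseteq> inR ` V"
    unfolding nb_def using v by (auto elim!: FV_cases simp: FE_simps adjG_def)
  have "card (nb (Inr v)) \<le> card (inR ` V)"
    by (rule card_mono[OF _ sub]) (use finV in simp)
  also have "\<dots> \<le> n" using card_image_le[of V Inr] finV cardV by simp
  finally show ?thesis .
qed

lemma exw: "\<exists>w. adjG c w"
proof -
  have "card (V - {c}) > 0" using cardVc[OF cV] n5 by simp
  then have "V - {c} \<noteq> {}" using card_gt_0_iff by blast
  then obtain w1 where w1: "w1 \<in> V" "w1 \<noteq> c" by blast
  have "card (V - {c, w1}) = n - 2" using finV cardV cV w1 by (simp add: card_Diff_subset)
  then have "card (V - {c,w1}) > 0" using n5 by simp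
  then have "V - {c,w1} \<noteq> {}" using card_gt_0_iff by blast
  then obtain w2 where w2: "w2 \<in> V" "w2 \<noteq> c" "w2 \<noteq> w1" by blast
  show ?thesis
  proof (rule ccontr)
    assume "\<not> ?thesis"
    then have "{c,w1} \<in> M" "{c,w2} \<in> M" using w1 w2 cV unfolding adjG_def by auto
    then have "{c,w1} = {c,w2}" using match_eq by blast
    then show False using w1 w2 by (auto simp: doubleton_eq_iff)
  qed
qed

lemma nbC: "card (nb (Inr c)) \<ge> n + 1"
proof -
  obtain w where w: "adjG c w" using exw by blast
  have "insert (Inr w) (inL ` V) \<subseteq> nb (Inr c)"
    unfolding nb_def using w cV by (auto simp: FE_simps FV_iff adjG_def)
  moreover have "finite (nb (Inr c))" using finFV unfolding nb_def by auto
  ultimately have "card (insert (Inr w) (inL ` V)) \<le> card (nb (Inr c))" by (rule card_mono[rotated])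
  moreover have "card (insert (Inr w) (inL ` V)) = n + 1"
  proof -
    have ci: "card (inL ` V) = n" using cardV by (simp add: card_image inj_on_def)
    have "Inr w \<notin> inL ` V" by auto
    then show ?thesis using finV ci by (simp add: card_insert_if)
  qed
  ultimately show ?thesis by simp
qed

lemma conn: "a \<in> V \<Longrightarrow> b \<in> V \<Longrightarrow> a \<noteq> b \<Longrightarrow> adjG a b \<or> (\<exists>w. adjG a w \<and> adjG w b)"
proof -
  assume ab: "a \<in> V" "b \<in> V" "a \<noteq> b"
  show ?thesis
  proof (cases "adjG a b")
    case False
    then have M1: "{a,b} \<in> M" using ab unfolding adjG_def by auto
    have "card (V - {a, b}) = n - 2" using finV cardV ab by (simp add: card_Diff_subset)
    then have "card (V - {a,b}) > 0" using n5 by simp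
    then have "V - {a,b} \<noteq> {}" using card_gt_0_iff by blast
    then obtain w where w: "w \<in> V" "w \<noteq> a" "w \<noteq> b" by blast
    have "{a,w} \<notin> M"
    proof
      assume "{a,w} \<in> M" then have "{a,w} = {a,b}" using match_eq M1 by blast
      then show False using w by (auto simp: doubleton_eq_iff)
    qed
    moreover have "{w,b} \<notin> M"
    proof
      assume "{w,b} \<in> M" then have "{w,b} = {a,b}" using match_eq M1 by blast
      then show False using w by (auto simp: doubleton_eq_iff)
    qed
    ultimately show ?thesis using w ab unfolding adjG_def by auto
  qed simp
qed

lemma aut_struct:
  assumes A: "graph_aut FV FE \<sigma>"
  shows "(\<forall>u\<in>V. \<exists>u'\<in>V. \<sigma> (Inl u) = Inl u') \<and> (\<forall>v\<in>V. \<exists>v'\<in>V. \<sigma> (Inr v) = Inr v')"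
proof -
  have bij: "bij_betw \<sigma> FV FV" using A unfolding graph_aut_def by blast
  have inj: "inj_on \<sigma> FV" and img: "\<sigma> ` FV = FV"
    using bij bij_betw_imp_inj_on bij_betw_imp_surj_on by blast+
  have inF: "\<sigma> x \<in> FV" if "x \<in> FV" for x using img that by blast
  have cF: "Inr c \<in> FV" using cV by (simp add: FV_iff)
  have fixc: "\<sigma> (Inr c) = Inr c"
  proof -
    have "card (nb (\<sigma> (Inr c))) \<ge> n + 1" using nb_card[OF A cF] nbC by simp
    have "\<sigma> (Inr c) \<in> FV" using inF cF .
    then show ?thesis
    proof (rule FV_cases)
      fix a assume "a \<in> V" "\<sigma> (Inr c) = Inl a"
      then show ?thesis using nbL[of a] \<open>card (nb (\<sigma> (Inr c))) \<ge> n + 1\<close> by simp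
    next
      fix a assume a: "a \<in> V" "\<sigma> (Inr c) = Inr a"
      show ?thesis
      proof (cases "a = c")
        case False
        then show ?thesis using nbR[OF a(1) False] a(2) \<open>card (nb (\<sigma> (Inr c))) \<ge> n + 1\<close> by simp
      qed (use a in simp)
    qed
  qed
  have neC: "\<sigma> x \<noteq> Inr c" if "x \<in> FV" "x \<noteq> Inr c" for x
  proof
    assume "\<sigma> x = Inr c"
    then have "\<sigma> x = \<sigma> (Inr c)" using fixc by simp
    then have "x = Inr c" using inj_onD[OF inj _ that(1) cF] by blast
    then show False using that(2) by simp
  qed
  have L: "\<forall>u\<in>V. \<exists>u'\<in>V. \<sigma> (Inl u) = Inl u'"
  proof (rule ccontr)
    assume "\<not> ?thesis"
    then obtain u where u: "u \<in> V" "\<not> (\<exists>u'\<in>V. \<sigma> (Inl u) = Inl u')" by blast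
    have "\<sigma> (Inl u) \<in> FV" using inF u by (simp add: FV_iff)
    then obtain v where v: "v \<in> V" "\<sigma> (Inl u) = Inr v" using u by (auto elim!: FV_cases)
    have vc: "v \<noteq> c" using neC[of "Inl u"] u v by (auto simp: FV_iff)
    have propg: "\<exists>v'. \<sigma> (Inl b) = Inr v' \<and> v' \<noteq> c \<and> v' \<in> V"
      if "a \<in> V" "b \<in> V" "adjG a b" "\<sigma> (Inl a) = Inr w" "w \<noteq> c" for a b w
    proof -
      have "{\<sigma> (Inl a), \<sigma> (Inl b)} \<in> FE"
        using aut_adj[OF A, of "Inl a" "Inl b"] that by (simp add: FV_iff FE_simps)
      moreover have "\<sigma> (Inl b) \<in> FV" using inF that by (simp add: FV_iff)
      moreover have "\<sigma> (Inl b) \<noteq> Inr c" using neC[of "Inl b"] that by (simp add: FV_iff)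
      ultimately show ?thesis using that by (auto elim!: FV_cases simp: FE_simps)
    qed
    have all: "\<exists>v'. \<sigma> (Inl b) = Inr v' \<and> v' \<noteq> c \<and> v' \<in> V" if b: "b \<in> V" for b
    proof (cases "b = u")
      case True then show ?thesis using v vc by auto
    next
      case False
      from conn[OF u(1) b False[symmetric]] show ?thesis
      proof
        assume "adjG u b" then show ?thesis using propg u v vc b by blast
      next
        assume "\<exists>w. adjG u w \<and> adjG w b"
        then obtain w where w: "adjG u w" "adjG w b" by blast
        then have wV: "w \<in> V" unfolding adjG_def by auto
        obtain v' where "\<sigma> (Inl w) = Inr v'" "v' \<noteq> c" using propg[OF u(1) wV w(1) v(2) vc] by blast
        then show ?thesis using propg[OF wV b w(2)] by blast
      qed
    qed
    have sub: "\<sigma> ` (inL ` V) \<subseteq> inR ` (V - {c})" using all by fastforce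
    have "card (\<sigma> ` (inL ` V)) = n"
      using card_image[OF inj_on_subset[OF inj, of "inL ` V"]] finV cardV
      by (auto simp: FV_def functigraph_V_def card_image)
    moreover have "card (\<sigma> ` (inL ` V)) \<le> card (inR ` (V - {c}))"
      by (rule card_mono[OF _ sub]) (use finV in auto)
    moreover have "card (inR ` (V - {c})) \<le> n - 1"
      using card_image_le[of "V - {c}" Inr] finV cardVc[OF cV] by simp
    ultimately show False using n5 by simp
  qed
  have R: "\<forall>v\<in>V. \<exists>v'\<in>V. \<sigma> (Inr v) = Inr v'"
  proof (rule ccontr)
    assume "\<not> ?thesis"
    then obtain v where v: "v \<in> V" "\<not> (\<exists>v'\<in>V. \<sigma> (Inr v) = Inr v')" by blast
    have "\<sigma> (Inr v) \<in> FV" using inF v by (simp add: FV_iff)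
    then obtain a where a: "a \<in> V" "\<sigma> (Inr v) = Inl a" using v by (auto elim!: FV_cases)
    have sub: "\<sigma> ` (inL ` V) \<subseteq> inL ` V" using L by fastforce
    have "card (\<sigma> ` (inL ` V)) = card (inL ` V)"
      using card_image[OF inj_on_subset[OF inj, of "inL ` V"]]
      by (auto simp: FV_def functigraph_V_def)
    then have eq: "\<sigma> ` (inL ` V) = inL ` V" using card_subset_eq[OF _ sub] finV by auto
    have "inL a \<in> \<sigma> ` (inL ` V)" unfolding eq using a(1) by simp
    then obtain y where y: "y \<in> inL ` V" "inL a = \<sigma> y" by (rule imageE)
    from y(1) obtain u where u0: "u \<in> V" "y = inL u" by (rule imageE)
    have u: "u \<in> V" "\<sigma> (Inl u) = Inl a" using u0 y(2) by simp_all
    then have "\<sigma> (Inl u) = \<sigma> (Inr v)" using a(2) by simp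
    then have "Inl u = Inr v" using inj_onD[OF inj \<open>\<sigma> (Inl u) = \<sigma> (Inr v)\<close>] u(1) v(1) by (simp add: FV_iff)
    then show False by simp
  qed
  show ?thesis using L R by blast
qed

lemma lab_exists:
  "\<exists>l1. l1 ` V \<subseteq> {1..max (n - 2*i) (phi i)} \<and> inj_on l1 U \<and> (\<forall>e\<in>M. inj_on l1 e)
        \<and> inj_on (\<lambda>e. l1 ` e) M"
proof -
  define N where "N = max (n - 2*i) (phi i)"
  have finU: "finite U" using finV unfolding U_def by auto
  obtain f where f: "f ` U \<subseteq> {1..N}" "inj_on f U"
    using card_le_inj[OF finU finite_atLeastAtMost[of 1 N]] cardU unfolding N_def by auto
  define P where "P = {S. S \<subseteq> {1..N} \<and> card S = 2}"
  have finP: "finite P" unfolding P_def by (rule finite_subset[of _ "Pow {1..N}"]) auto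
  have "card M \<le> card P"
  proof -
    have "i \<le> phi i choose 2" using phiP by simp
    also have "\<dots> \<le> N choose 2" unfolding N_def by (rule binomial_right_mono) simp
    also have "\<dots> = card P" unfolding P_def using n_subsets[of "{1..N}" 2] by simp
    finally show ?thesis using cardM by simp
  qed
  then obtain h where h: "h ` M \<subseteq> P" "inj_on h M" using card_le_inj[OF finM finP] by blast
  define bb where "bb e = (SOME \<phi>. bij_betw \<phi> e (h e))" for e
  have c2: "card e = 2" if "e \<in> M" for e using edgeM[OF that] by auto
  have bbP: "bij_betw (bb e) e (h e)" if e: "e \<in> M" for e
  proof -
    have "h e \<in> P" using h e by auto
    then have "finite (h e)" "card (h e) = 2" unfolding P_def by (auto intro: finite_subset)
    then have "\<exists>\<phi>. bij_betw \<phi> e (h e)"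
    proof -
      have "finite e" using c2[OF e] by (intro card_ge_0_finite) simp
      then show ?thesis using finite_same_card_bij[of e "h e"] c2[OF e] \<open>finite (h e)\<close> \<open>card (h e) = 2\<close> by simp
    qed
    then show ?thesis unfolding bb_def by (rule someI_ex)
  qed
  define l1 where "l1 u = (if u \<in> U then f u else bb (THE e. e \<in> M \<and> u \<in> e) u)" for u
  have l1e: "l1 u = bb e u" if "e \<in> M" "u \<in> e" for e u
  proof -
    have "u \<notin> U" using that unfolding U_def W_def by auto
    moreover have "(THE e. e \<in> M \<and> u \<in> e) = e"
      by (rule the_equality) (use that match_eq in auto)
    ultimately show ?thesis unfolding l1_def by simp
  qed
  have imge: "l1 ` e = h e" if "e \<in> M" for e
  proof -
    have "l1 ` e = bb e ` e" using l1e[OF that] by simp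
    then show ?thesis using bij_betw_imp_surj_on[OF bbP[OF that]] by simp
  qed
  have inje: "inj_on l1 e" if "e \<in> M" for e
  proof -
    have "inj_on (bb e) e" using bij_betw_imp_inj_on[OF bbP[OF that]] .
    moreover have "inj_on l1 e = inj_on (bb e) e" by (rule inj_on_cong) (simp add: l1e[OF that])
    ultimately show ?thesis by simp
  qed
  have injM: "inj_on (\<lambda>e. l1 ` e) M"
  proof -
    have "inj_on (\<lambda>e. l1 ` e) M = inj_on h M" by (rule inj_on_cong) (simp add: imge)
    then show ?thesis using h(2) by simp
  qed
  have injU: "inj_on l1 U" using f(2) unfolding l1_def by (simp add: inj_on_def)
  have imV: "l1 ` V \<subseteq> {1..N}"
  proof
    fix x assume "x \<in> l1 ` V"
    then obtain u where u: "u \<in> V" "x = l1 u" by blast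
    show "x \<in> {1..N}"
    proof (cases "u \<in> U")
      case True then show ?thesis using f u unfolding l1_def by auto
    next
      case False
      then obtain e where e: "e \<in> M" "u \<in> e" using u unfolding U_def W_def by auto
      then have "x \<in> h e" using imge u by blast
      moreover have "h e \<in> P" using h e by auto
      ultimately show ?thesis unfolding P_def by auto
    qed
  qed
  show ?thesis unfolding N_def[symmetric] using imV injU inje injM by blast
qed

lemma upper: "\<exists>l. distinguishing_labeling FV FE (max (n - 2*i) (phi i)) l"
proof -
  obtain l1 where l1: "l1 ` V \<subseteq> {1..max (n - 2*i) (phi i)}" "inj_on l1 U" "\<forall>e\<in>M. inj_on l1 e"
    "inj_on (\<lambda>e. l1 ` e) M" using lab_exists by blast
  define l where "l = case_sum l1 l1"
  have "distinguishing_labeling FV FE (max (n - 2*i) (phi i)) l"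
    unfolding distinguishing_labeling_def
  proof (intro conjI allI impI)
    show "l ` FV \<subseteq> {1..max (n - 2*i) (phi i)}" using l1(1) unfolding l_def
      by (auto elim!: FV_cases)
    fix \<sigma> assume as: "graph_aut FV FE \<sigma> \<and> (\<forall>v\<in>FV. l (\<sigma> v) = l v)"
    then have A: "graph_aut FV FE \<sigma>" and PL: "\<forall>v\<in>FV. l (\<sigma> v) = l v" by auto
    have bij: "bij_betw \<sigma> FV FV" using A unfolding graph_aut_def by blast
    have inj: "inj_on \<sigma> FV" using bij bij_betw_imp_inj_on by blast
    note S = aut_struct[OF A]
    define p1 where "p1 u = projl (\<sigma> (Inl u))" for u
    define p2 where "p2 u = projr (\<sigma> (Inr u))" for u
    have p1: "\<sigma> (Inl u) = Inl (p1 u) \<and> p1 u \<in> V" if "u \<in> V" for u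
    proof -
      have "\<exists>u'\<in>V. \<sigma> (Inl u) = Inl u'" using conjunct1[OF S] that by (rule bspec)
      then obtain u' where "u' \<in> V" "\<sigma> (Inl u) = Inl u'" by (rule bexE)
      then show ?thesis unfolding p1_def by simp
    qed
    have p2: "\<sigma> (Inr u) = Inr (p2 u) \<and> p2 u \<in> V" if "u \<in> V" for u
    proof -
      have "\<exists>u'\<in>V. \<sigma> (Inr u) = Inr u'" using conjunct2[OF S] that by (rule bspec)
      then obtain u' where "u' \<in> V" "\<sigma> (Inr u) = Inr u'" by (rule bexE)
      then show ?thesis unfolding p2_def by simp
    qed
    have fix1: "p1 u = u" if u: "u \<in> V" for u
    proof (rule fixl[where \<pi>=p1, OF l1(2) _ l1(4) _ _ _ _ u])
      show "\<And>e. e \<in> M \<Longrightarrow> inj_on l1 e" using l1(3) by blast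
      show "\<forall>x\<in>V. p1 x \<in> V" using p1 by blast
      show "inj_on p1 V"
      proof (rule inj_onI)
        fix x y assume "x \<in> V" "y \<in> V" "p1 x = p1 y"
        then have "\<sigma> (Inl x) = \<sigma> (Inl y)" using p1[OF \<open>x \<in> V\<close>] p1[OF \<open>y \<in> V\<close>] by simp
        then show "x = y" using inj_onD[OF inj, of "Inl x" "Inl y"] \<open>x \<in> V\<close> \<open>y \<in> V\<close> by (simp add: FV_iff)
      qed
      show "\<forall>x\<in>V. \<forall>y\<in>V. x \<noteq> y \<longrightarrow> adjG x y = adjG (p1 x) (p1 y)"
      proof (intro ballI impI)
        fix x y assume xy: "x \<in> V" "y \<in> V"
        have "adjG x y \<longleftrightarrow> {Inl x, Inl y} \<in> FE" by (simp add: FE_ll)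
        also have "\<dots> \<longleftrightarrow> {\<sigma> (Inl x), \<sigma> (Inl y)} \<in> FE"
          using aut_adj[OF A, of "Inl x" "Inl y"] xy by (simp add: FV_iff)
        also have "\<dots> \<longleftrightarrow> adjG (p1 x) (p1 y)" using p1[OF xy(1)] p1[OF xy(2)] by (simp add: FE_ll)
        finally show "adjG x y = adjG (p1 x) (p1 y)" .
      qed
      show "\<forall>x\<in>V. l1 (p1 x) = l1 x"
      proof
        fix x assume x: "x \<in> V"
        have "l (\<sigma> (Inl x)) = l (Inl x)" using PL x by (simp add: FV_iff)
        then show "l1 (p1 x) = l1 x" using p1[OF x] by (simp add: l_def)
      qed
    qed
    have fix2: "p2 u = u" if u: "u \<in> V" for u
    proof (rule fixl[where \<pi>=p2, OF l1(2) _ l1(4) _ _ _ _ u])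
      show "\<And>e. e \<in> M \<Longrightarrow> inj_on l1 e" using l1(3) by blast
      show "\<forall>x\<in>V. p2 x \<in> V" using p2 by blast
      show "inj_on p2 V"
      proof (rule inj_onI)
        fix x y assume "x \<in> V" "y \<in> V" "p2 x = p2 y"
        then have "\<sigma> (Inr x) = \<sigma> (Inr y)" using p2[OF \<open>x \<in> V\<close>] p2[OF \<open>y \<in> V\<close>] by simp
        then show "x = y" using inj_onD[OF inj, of "Inr x" "Inr y"] \<open>x \<in> V\<close> \<open>y \<in> V\<close> by (simp add: FV_iff)
      qed
      show "\<forall>x\<in>V. \<forall>y\<in>V. x \<noteq> y \<longrightarrow> adjG x y = adjG (p2 x) (p2 y)"
      proof (intro ballI impI)
        fix x y assume xy: "x \<in> V" "y \<in> V"
        have "adjG x y \<longleftrightarrow> {Inr x, Inr y} \<in> FE" by (simp add: FE_rr)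
        also have "\<dots> \<longleftrightarrow> {\<sigma> (Inr x), \<sigma> (Inr y)} \<in> FE"
          using aut_adj[OF A, of "Inr x" "Inr y"] xy by (simp add: FV_iff)
        also have "\<dots> \<longleftrightarrow> adjG (p2 x) (p2 y)" using p2[OF xy(1)] p2[OF xy(2)] by (simp add: FE_rr)
        finally show "adjG x y = adjG (p2 x) (p2 y)" .
      qed
      show "\<forall>x\<in>V. l1 (p2 x) = l1 x"
      proof
        fix x assume x: "x \<in> V"
        have "l (\<sigma> (Inr x)) = l (Inr x)" using PL x by (simp add: FV_iff)
        then show "l1 (p2 x) = l1 x" using p2[OF x] by (simp add: l_def)
      qed
    qed
    show "\<forall>v\<in>FV. \<sigma> v = v"
    proof
      fix v assume "v \<in> FV"
      then show "\<sigma> v = v"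
      proof (rule FV_cases)
        fix a assume "a \<in> V" "v = Inl a" then show ?thesis using p1 fix1 by simp
      next
        fix a assume "a \<in> V" "v = Inr a" then show ?thesis using p2 fix2 by simp
      qed
    qed
  qed
  then show ?thesis by blast
qed

lemma main: "Dist (functigraph_V V) (functigraph_E V (complete_edges V - M) g) = max (n - 2 * i) (phi i)"
  unfolding FV_def[symmetric] FE_def[symmetric] Dist_def
  by (rule Least_equality) (use upper lower in auto)

end

theorem theorem3p4:
  fixes V :: "'a set" and M :: "'a set set" and n i :: nat and g :: "'a \<Rightarrow> 'a" and c :: 'a
  assumes "finite V" and "card V = n" and "n \<ge> 5"
    and "1 \<le> i" and "i \<le> n div 2"
    and "M \<subseteq> complete_edges V" and "card M = i" and "is_matching M"
    and "c \<in> V" and "\<forall>u\<in>V. g u = c"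
  shows "Dist (functigraph_V V) (functigraph_E V (complete_edges V - M) g) = max (n - 2 * i) (phi i)"
proof -
  interpret FG V M n i g c by unfold_locales (use assms in auto)
  show ?thesis by (rule main)
qed

end
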